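(* Let $A$ be a finite alphabet, $u,v\in A^*$, $n\in\mathbb{N}$, and $B,C\subseteq A$ subalphabets. If $uB^*C^*B^*v\subseteq[uv]_n$, then $u(B\cup C)^*v\subseteq[uv]_n$.
   Context: $u\sim_n v$ iff $u,v$ have exactly the same (scattered) subwords of length at most $n$; $[w]_n$ denotes the $\sim_n$-equivalence class of $w$. *)

theory Defs
  imports Main "HOL-Library.Sublist"
begin

definition simeq :: "nat \<Rightarrow> 'a list \<Rightarrow> 'a list \<Rightarrow> bool" where
  "simeq n u v \<longleftrightarrow> (\<forall>w. length w \<le> n \<longrightarrow> (subseq w u \<longleftrightarrow> subseq w v))"

definition simclass :: "nat \<Rightarrow> 'a list \<Rightarrow> 'a list set" where
  "simclass n w = {x. simeq n x w}"

end

theory Submission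
  imports Defs
begin

lemma subseq_take': "subseq (take k xs) xs"
  by (metis append_take_drop_id subseq_rev_drop_many subseq_order.refl)

lemma subseq_drop': "subseq (drop k xs) xs"
  by (metis append_take_drop_id subseq_drop_many subseq_order.refl)

lemma core:
  fixes s u v w :: "'a list" and G :: "'a set"
  assumes H: "\<And>t x. t \<in> lists G \<Longrightarrow> length t \<le> 2 \<Longrightarrow> length x \<le> n
                \<Longrightarrow> subseq x (u @ t @ v) \<Longrightarrow> subseq x (u @ v)"
    and s: "subseq s (u @ w @ v)" and len: "length s \<le> n" and wG: "set w \<subseteq> G"
  shows "subseq s (u @ v)"
proof (rule ccontr)
  assume nc: "\<not> subseq s (u @ v)"
  obtain s1 s23 where e1: "s = s1 @ s23" and h1: "subseq s1 u" and h23: "subseq s23 (w @ v)"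
    by (rule subseq_appendE[OF s])
  obtain s2 s3 where e2: "s23 = s2 @ s3" and h2: "subseq s2 w" and h3: "subseq s3 v"
    by (rule subseq_appendE[OF h23])
  define K where "K = {k. k \<le> length s \<and> subseq (take k s) u}"
  define R where "R = {r. r \<le> length s \<and> subseq (drop (length s - r) s) v}"
  have fK: "finite K" unfolding K_def by simp
  have fR: "finite R" unfolding R_def by simp
  have s1K: "length s1 \<in> K" unfolding K_def using e1 h1 by simp
  have s3R: "length s3 \<in> R" unfolding R_def using e1 e2 h3 by simp
  define k where "k = Max K"
  define r where "r = Max R"
  have kK: "k \<in> K" unfolding k_def using fK s1K Max_in by blast
  have rR: "r \<in> R" unfolding r_def using fR s3R Max_in by blast
  have k1: "length s1 \<le> k" unfolding k_def using fK s1K by simp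
  have r3: "length s3 \<le> r" unfolding r_def using fR s3R by simp
  have kmax: "\<And>j. j \<in> K \<Longrightarrow> j \<le> k" unfolding k_def using fK by simp
  have rmax: "\<And>j. j \<in> R \<Longrightarrow> j \<le> r" unfolding r_def using fR by simp
  have P: "subseq (take k s) u" and kl: "k \<le> length s" using kK K_def by auto
  have S: "subseq (drop (length s - r) s) v" and rl: "r \<le> length s" using rR R_def by auto
  have lt: "k + r < length s"
  proof (rule ccontr)
    assume "\<not> k + r < length s"
    hence "length s - r \<le> k" by simp
    hence "drop k s = drop (k - (length s - r)) (drop (length s - r) s)" by simp
    hence "subseq (drop k s) v" using S subseq_drop' subseq_order.trans by metis
    hence "subseq s (u @ v)" using P by (metis append_take_drop_id list_emb_append_mono)
    thus False using nc by simp
  qed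
  have inG: "\<And>i. length s1 \<le> i \<Longrightarrow> i < length s - length s3 \<Longrightarrow> s ! i \<in> G"
  proof -
    fix i assume a: "length s1 \<le> i" "i < length s - length s3"
    have il: "i - length s1 < length s2" using a e1 e2 by simp
    have "s ! i = s2 ! (i - length s1)" using a il e1 e2 by (simp add: nth_append)
    moreover note il
    ultimately have "s ! i \<in> set s2" by simp
    moreover have "set s2 \<subseteq> set w" using h2 by (induct rule: list_emb.induct) auto
    ultimately show "s ! i \<in> G" using wG by blast
  qed
  define a where "a = s ! k"
  define c where "c = s ! (length s - r - 1)"
  have aG: "a \<in> G" unfolding a_def
  proof (rule inG)
    show "length s1 \<le> k" by (rule k1)
    show "k < length s - length s3" using r3 lt by linarith
  qed
  have cG: "c \<in> G" unfolding c_def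
  proof (rule inG)
    show "length s1 \<le> length s - r - 1" using k1 lt by linarith
    show "length s - r - 1 < length s - length s3" using r3 lt by linarith
  qed
  show False
  proof (cases "k + r + 1 = length s")
    case True
    have e: "s = take k s @ s ! k # drop (Suc k) s" by (rule id_take_nth_drop) (use lt in simp)
    have kk: "length s - r = Suc k" using True by simp
    have "take k s @ [a] @ drop (length s - r) s = take k s @ s ! k # drop (Suc k) s"
      unfolding a_def kk by simp
    hence "s = take k s @ [a] @ drop (length s - r) s" using e by metis
    hence "subseq s (u @ [a] @ v)" using P S
      by (metis list_emb_append_mono subseq_order.refl)
    hence "subseq s (u @ v)" using H[of "[a]" s] aG len by simp
    thus False using nc by simp
  next
    case False
    hence lt2: "k + r + 2 \<le> length s" using lt by simp
    define x where "x = take k s @ [a, c] @ drop (length s - r) s"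
    have lx: "length x \<le> n" unfolding x_def using lt2 len kl rl by simp
    have "subseq x (u @ [a, c] @ v)" unfolding x_def using P S
      by (metis list_emb_append_mono subseq_order.refl)
    hence "subseq x (u @ v)" using H[of "[a,c]" x] aG cG lx by simp
    then obtain al be where xe: "x = al @ be" and ha: "subseq al u" and hb: "subseq be v"
      by (rule subseq_appendE)
    show False
    proof (cases "k < length al")
      case True
      have "take (Suc k) x = take (Suc k) al" using xe True by simp
      moreover have "take (Suc k) x = take (Suc k) s"
        unfolding x_def a_def using kl lt
        by (simp add: take_Suc_conv_app_nth)
      ultimately have "subseq (take (Suc k) s) u"
        using ha subseq_take' subseq_order.trans by metis
      hence "Suc k \<in> K" unfolding K_def using lt by simp
      thus False using kmax by fastforce
    next
      case False
      have "drop (Suc k) x = drop (Suc k - length al) be" using xe False by simp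
      hence "subseq (drop (Suc k) x) v" using hb subseq_drop' subseq_order.trans by metis
      moreover have "drop (Suc k) x = c # drop (length s - r) s"
        unfolding x_def using kl by simp
      moreover have "c # drop (length s - r) s = drop (length s - Suc r) s"
      proof -
        have l1: "length s - Suc r < length s" using lt by simp
        have l2: "Suc (length s - Suc r) = length s - r" using lt by simp
        show ?thesis unfolding c_def
          using Cons_nth_drop_Suc[OF l1] l2 by simp
      qed
      ultimately have "Suc r \<in> R" unfolding R_def using lt by simp
      thus False using rmax by fastforce
    qed
  qed
qed

theorem lemma16:
  fixes A B C :: "'a set" and u v :: "'a list" and n :: nat
  assumes "finite A"
    and "u \<in> lists A" and "v \<in> lists A"
    and "B \<subseteq> A" and "C \<subseteq> A"
    and "{u @ x @ y @ z @ v | x y z. x \<in> lists B \<and> y \<in> lists C \<and> z \<in> lists B}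
           \<subseteq> simclass n (u @ v)"
  shows "{u @ w @ v | w. w \<in> lists (B \<union> C)} \<subseteq> simclass n (u @ v)"
proof
  fix y assume "y \<in> {u @ w @ v | w. w \<in> lists (B \<union> C)}"
  then obtain w where y: "y = u @ w @ v" and w: "w \<in> lists (B \<union> C)" by blast
  have H: "subseq x (u @ v)" if t: "t \<in> lists (B \<union> C)" "length t \<le> 2" "length x \<le> n"
      "subseq x (u @ t @ v)" for t x
  proof -
    have "\<exists>x y z. t = x @ y @ z \<and> x \<in> lists B \<and> y \<in> lists C \<and> z \<in> lists B"
    proof -
      consider "t = []" | p where "t = [p]" | p q where "t = [p, q]"
        using t(2) by (cases t; cases "tl t") auto
      thus ?thesis
      proof cases
        case 1 thus ?thesis by (intro exI[of _ "[]"]) simp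
      next
        case (2 p)
        hence pBC: "p \<in> B \<union> C" using t(1) by auto
        show ?thesis
        proof (cases "p \<in> B")
          case True thus ?thesis using 2
            by (intro exI[of _ "[p]"] exI[of _ "[]"]) auto
        next
          case False thus ?thesis using 2 pBC
            by (intro exI[of _ "[]"] exI[of _ "[p]"]) auto
        qed
      next
        case (3 p q)
        hence pq: "p \<in> B \<union> C" "q \<in> B \<union> C" using t(1) by auto
        show ?thesis
        proof (cases "p \<in> B")
          case True
          show ?thesis
          proof (cases "q \<in> B")
            case True thus ?thesis using 3 \<open>p \<in> B\<close>
              by (intro exI[of _ "[p,q]"] exI[of _ "[]"]) auto
          next
            case False thus ?thesis using 3 \<open>p \<in> B\<close> pq
              by (intro exI[of _ "[p]"] exI[of _ "[q]"] exI[of _ "[]"]) auto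
          qed
        next
          case False
          hence pC: "p \<in> C" using pq by auto
          show ?thesis
          proof (cases "q \<in> B")
            case True thus ?thesis using 3 pC
              by (intro exI[of _ "[]"] exI[of _ "[p]"] exI[of _ "[q]"]) auto
          next
            case False thus ?thesis using 3 pC pq
              by (intro exI[of _ "[]"] exI[of _ "[p,q]"]) auto
          qed
        qed
      qed
    qed
    then obtain x1 y1 z1 where "t = x1 @ y1 @ z1" "x1 \<in> lists B" "y1 \<in> lists C" "z1 \<in> lists B"
      by blast
    hence "u @ t @ v \<in> {u @ x @ y @ z @ v | x y z. x \<in> lists B \<and> y \<in> lists C \<and> z \<in> lists B}"
      by (intro CollectI exI[of _ x1] exI[of _ y1] exI[of _ z1]) simp
    hence "u @ t @ v \<in> simclass n (u @ v)" using assms(6) by blast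
    thus ?thesis using t(3,4) unfolding simclass_def simeq_def by auto
  qed
  have "simeq n y (u @ v)" unfolding simeq_def
  proof (intro allI impI iffI)
    fix x :: "'a list" assume "length x \<le> n" "subseq x y"
    moreover have "set w \<subseteq> B \<union> C" using w by auto
    ultimately show "subseq x (u @ v)" using core[of "B \<union> C" n u v x w, OF H] y by simp
  next
    fix x :: "'a list" assume "subseq x (u @ v)"
    moreover have "subseq (u @ v) y" unfolding y
      by (metis list_emb_append_mono subseq_drop_many subseq_order.refl)
    ultimately show "subseq x y" using subseq_order.trans by metis
  qed
  thus "y \<in> simclass n (u @ v)" unfolding simclass_def by simp
qed

end
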